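(* Let $n\ge 2$ and let $\mu_1,\mu_2\in\Lambda$ satisfy $\alpha^\vee_i(\mu_1)=\alpha^\vee_i(\mu_2)$ for all $1\le i\le n-1$. Then the assignment $$E^{(r)}_i\mapsto E^{(r)}_i,\quad F^{(r)}_i\mapsto F^{(r)}_i,\quad D^{(s)}_i\mapsto D^{(s-\epsilon^\vee_i(\mu_1-\mu_2))}_i,\quad \widetilde D^{(s)}_i\mapsto \widetilde D^{(s+\epsilon^\vee_i(\mu_1-\mu_2))}_i$$ (for all admissible $i,r,s$) gives rise to a $\mathbb{C}$-algebra isomorphism $Y_{\mu_1}(\mathfrak{gl}_n)\xrightarrow{\sim} Y_{\mu_2}(\mathfrak{gl}_n)$.
   Context: Let $\Lambda=\bigoplus_{j=1}^n\mathbb{Z}\epsilon_j$ and let $\epsilon^\vee_1,\dots,\epsilon^\vee_n$ be the dual basis of the dual lattice ($\epsilon^\vee_i(\epsilon_j)=\delta_{ij}$); set $\alpha^\vee_i=\epsilon^\vee_i-\epsilon^\vee_{i+1}$ for $1\le i\le n-1$. For $\nu\in\Lambda$ put $d_j:=\epsilon^\vee_j(\nu)$. The shifted Drinfeld Yangian $Y_\nu(\mathfrak{gl}_n)$ is the associative $\mathbb{C}$-algebra generated by $E_i^{(r)},F_i^{(r)}$ ($1\le i<n$, $r\ge1$), $D_i^{(s)}$ ($1\le i\le n$, $s\ge d_i$), $\widetilde D_i^{(s)}$ ($1\le i\le n$, $s\ge -d_i$), with defining relations (all admissible indices): (Y0) $D_i^{(d_i)}=1$, $\sum_{t=d_i}^{r+d_i}D_i^{(t)}\widetilde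 D_i^{(r-t)}=-\delta_{r,0}$, $[D_i^{(r)},D_j^{(s)}]=0$; (Y1) $[E_i^{(r)},F_j^{(s)}]=-\delta_{i,j}\sum_{t=-d_i}^{r+s-1-d_{i+1}}\widetilde D_i^{(t)}D_{i+1}^{(r+s-t-1)}$; (Y2) $[D_i^{(r)},E_j^{(s)}]=(\delta_{i,j+1}-\delta_{i,j})\sum_{t=d_i}^{r-1}D_i^{(t)}E_j^{(r+s-t-1)}$; (Y3) $[D_i^{(r)},F_j^{(s)}]=(\delta_{i,j}-\delta_{i,j+1})\sum_{t=d_i}^{r-1}F_j^{(r+s-t-1)}D_i^{(t)}$; (Y4) $[E_i^{(r)},E_i^{(s)}]=\sum_{t=1}^{r-1}E_i^{(t)}E_i^{(r+s-t-1)}-\sum_{t=1}^{s-1}E_i^{(t)}E_i^{(r+s-t-1)}$; (Y5) $[F_i^{(r)},F_i^{(s)}]=\sum_{t=1}^{s-1}F_i^{(r+s-t-1)}F_i^{(t)}-\sum_{t=1}^{r-1}F_i^{(r+s-t-1)}F_i^{(t)}$; (Y6) $[E_i^{(r+1)},E_{i+1}^{(s)}]-[E_i^{(r)},E_{i+1}^{(s+1)}]=-E_i^{(r)}E_{i+1}^{(s)}$; (Y7) $[F_i^{(r+1)},F_{i+1}^{(s)}]-[F_i^{(r)},F_{i+1}^{(s+1)}]=F_{i+1}^{(s)}F_i^{(r)}$; (Y8),(Y9) $[E_i^{(r)},E_j^{(s)}]=0=[F_i^{(r)},F_j^{(s)}]$ if $|i-j|>1$; (Y10),(Y11) for $|i-j|=1$: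 $[E_i^{(r)},[E_i^{(s)},E_j^{(t)}]]+[E_i^{(s)},[E_i^{(r)},E_j^{(t)}]]=0$ and the same with all $E$ replaced by $F$. *)

theory Defs
  imports "HOL-Algebra.QuotRing" "HOL-Algebra.Ideal" Complex_Main
begin

text \<open>E i r = E_i^(r), F i r = F_i^(r), D i s = D_i^(s), Dt i s = widetilde D_i^(s).
  A coweight mu in Lambda is given by its coordinates d_j = mu j (only j in 1..n matter).\<close>

datatype gen = E nat int | F nat int | D nat int | Dt nat int

definition adm :: "nat \<Rightarrow> (nat \<Rightarrow> int) \<Rightarrow> gen set" where
  "adm n \<mu> =
     {E i r | i r. 1 \<le> i \<and> i < n \<and> r \<ge> 1} \<union>
     {F i r | i r. 1 \<le> i \<and> i < n \<and> r \<ge> 1} \<union>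
     {D i s | i s. 1 \<le> i \<and> i \<le> n \<and> s \<ge> \<mu> i} \<union>
     {Dt i s | i s. 1 \<le> i \<and> i \<le> n \<and> s \<ge> - \<mu> i}"

text \<open>Elements: finitely supported functions from words to complex coefficients.\<close>

definition fmul :: "('g list \<Rightarrow> complex) \<Rightarrow> ('g list \<Rightarrow> complex) \<Rightarrow> 'g list \<Rightarrow> complex" where
  "fmul f g = (\<lambda>w. \<Sum>k\<in>{0..length w}. f (take k w) * g (drop k w))"

definition fadd :: "('g list \<Rightarrow> complex) \<Rightarrow> ('g list \<Rightarrow> complex) \<Rightarrow> 'g list \<Rightarrow> complex" where
  "fadd f g = (\<lambda>w. f w + g w)"

definition fsub :: "('g list \<Rightarrow> complex) \<Rightarrow> ('g list \<Rightarrow> complex) \<Rightarrow> 'g list \<Rightarrow> complex" where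
  "fsub f g = (\<lambda>w. f w - g w)"

definition fsmult :: "complex \<Rightarrow> ('g list \<Rightarrow> complex) \<Rightarrow> 'g list \<Rightarrow> complex" where
  "fsmult c f = (\<lambda>w. c * f w)"

definition fscal :: "complex \<Rightarrow> 'g list \<Rightarrow> complex" where
  "fscal c = (\<lambda>w. if w = [] then c else 0)"

definition fzero :: "'g list \<Rightarrow> complex" where
  "fzero = (\<lambda>w. 0)"

definition fone :: "'g list \<Rightarrow> complex" where
  "fone = fscal 1"

definition fgen :: "'g \<Rightarrow> 'g list \<Rightarrow> complex" where
  "fgen x = (\<lambda>w. if w = [x] then 1 else 0)"

definition fsum :: "('i \<Rightarrow> 'g list \<Rightarrow> complex) \<Rightarrow> 'i set \<Rightarrow> 'g list \<Rightarrow> complex" where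
  "fsum X T = (\<lambda>w. \<Sum>t\<in>T. X t w)"

definition fcomm :: "('g list \<Rightarrow> complex) \<Rightarrow> ('g list \<Rightarrow> complex) \<Rightarrow> 'g list \<Rightarrow> complex" where
  "fcomm a b = fsub (fmul a b) (fmul b a)"

definition free_alg :: "'g set \<Rightarrow> ('g list \<Rightarrow> complex) ring" where
  "free_alg G =
     \<lparr> carrier = {f. finite {w. f w \<noteq> 0} \<and> (\<forall>w. f w \<noteq> 0 \<longrightarrow> set w \<subseteq> G)},
       mult = fmul, one = fone, zero = fzero, add = fadd \<rparr>"

section \<open>Defining relations (each element r stands for the relation r = 0)\<close>

abbreviation g :: "gen \<Rightarrow> gen list \<Rightarrow> complex" where "g \<equiv> fgen"

definition delta :: "nat \<Rightarrow> nat \<Rightarrow> complex" where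
  "delta i j = (if i = j then 1 else 0)"

definition rels :: "nat \<Rightarrow> (nat \<Rightarrow> int) \<Rightarrow> (gen list \<Rightarrow> complex) set" where
  "rels n \<mu> =
   \<comment> \<open>Y0\<close>
   {fsub (g (D i (\<mu> i))) fone | i. 1 \<le> i \<and> i \<le> n} \<union>
   {fadd (fsum (\<lambda>t. fmul (g (D i t)) (g (Dt i (r - t)))) {\<mu> i .. r + \<mu> i})
         (if r = 0 then fone else fzero) | i r. 1 \<le> i \<and> i \<le> n \<and> r \<ge> 0} \<union>
   {fcomm (g (D i r)) (g (D j s)) | i j r s.
      1 \<le> i \<and> i \<le> n \<and> 1 \<le> j \<and> j \<le> n \<and> r \<ge> \<mu> i \<and> s \<ge> \<mu> j} \<union>
   \<comment> \<open>Y1\<close>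
   {fadd (fcomm (g (E i r)) (g (F j s)))
         (fsmult (delta i j)
            (fsum (\<lambda>t. fmul (g (Dt i t)) (g (D (Suc i) (r + s - t - 1))))
                  {- \<mu> i .. r + s - 1 - \<mu> (Suc i)})) | i j r s.
      1 \<le> i \<and> i < n \<and> 1 \<le> j \<and> j < n \<and> r \<ge> 1 \<and> s \<ge> 1} \<union>
   \<comment> \<open>Y2\<close>
   {fsub (fcomm (g (D i r)) (g (E j s)))
         (fsmult (delta i (Suc j) - delta i j)
            (fsum (\<lambda>t. fmul (g (D i t)) (g (E j (r + s - t - 1)))) {\<mu> i .. r - 1})) | i j r s.
      1 \<le> i \<and> i \<le> n \<and> 1 \<le> j \<and> j < n \<and> r \<ge> \<mu> i \<and> s \<ge> 1} \<union>
   \<comment> \<open>Y3\<close>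
   {fsub (fcomm (g (D i r)) (g (F j s)))
         (fsmult (delta i j - delta i (Suc j))
            (fsum (\<lambda>t. fmul (g (F j (r + s - t - 1))) (g (D i t))) {\<mu> i .. r - 1})) | i j r s.
      1 \<le> i \<and> i \<le> n \<and> 1 \<le> j \<and> j < n \<and> r \<ge> \<mu> i \<and> s \<ge> 1} \<union>
   \<comment> \<open>Y4\<close>
   {fsub (fcomm (g (E i r)) (g (E i s)))
         (fsub (fsum (\<lambda>t. fmul (g (E i t)) (g (E i (r + s - t - 1)))) {1 .. r - 1})
               (fsum (\<lambda>t. fmul (g (E i t)) (g (E i (r + s - t - 1)))) {1 .. s - 1})) | i r s.
      1 \<le> i \<and> i < n \<and> r \<ge> 1 \<and> s \<ge> 1} \<union>
   \<comment> \<open>Y5\<close>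
   {fsub (fcomm (g (F i r)) (g (F i s)))
         (fsub (fsum (\<lambda>t. fmul (g (F i (r + s - t - 1))) (g (F i t))) {1 .. s - 1})
               (fsum (\<lambda>t. fmul (g (F i (r + s - t - 1))) (g (F i t))) {1 .. r - 1})) | i r s.
      1 \<le> i \<and> i < n \<and> r \<ge> 1 \<and> s \<ge> 1} \<union>
   \<comment> \<open>Y6\<close>
   {fadd (fsub (fcomm (g (E i (r + 1))) (g (E (Suc i) s)))
               (fcomm (g (E i r)) (g (E (Suc i) (s + 1)))))
         (fmul (g (E i r)) (g (E (Suc i) s))) | i r s.
      1 \<le> i \<and> Suc i < n \<and> r \<ge> 1 \<and> s \<ge> 1} \<union>
   \<comment> \<open>Y7\<close>
   {fsub (fsub (fcomm (g (F i (r + 1))) (g (F (Suc i) s)))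
               (fcomm (g (F i r)) (g (F (Suc i) (s + 1)))))
         (fmul (g (F (Suc i) s)) (g (F i r))) | i r s.
      1 \<le> i \<and> Suc i < n \<and> r \<ge> 1 \<and> s \<ge> 1} \<union>
   \<comment> \<open>Y8, Y9\<close>
   {fcomm (g (E i r)) (g (E j s)) | i j r s.
      1 \<le> i \<and> i < n \<and> 1 \<le> j \<and> j < n \<and> (i > Suc j \<or> j > Suc i) \<and> r \<ge> 1 \<and> s \<ge> 1} \<union>
   {fcomm (g (F i r)) (g (F j s)) | i j r s.
      1 \<le> i \<and> i < n \<and> 1 \<le> j \<and> j < n \<and> (i > Suc j \<or> j > Suc i) \<and> r \<ge> 1 \<and> s \<ge> 1} \<union>
   \<comment> \<open>Y10, Y11\<close>
   {fadd (fcomm (g (E i r)) (fcomm (g (E i s)) (g (E j t))))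
         (fcomm (g (E i s)) (fcomm (g (E i r)) (g (E j t)))) | i j r s t.
      1 \<le> i \<and> i < n \<and> 1 \<le> j \<and> j < n \<and> (i = Suc j \<or> j = Suc i) \<and> r \<ge> 1 \<and> s \<ge> 1 \<and> t \<ge> 1} \<union>
   {fadd (fcomm (g (F i r)) (fcomm (g (F i s)) (g (F j t))))
         (fcomm (g (F i s)) (fcomm (g (F i r)) (g (F j t)))) | i j r s t.
      1 \<le> i \<and> i < n \<and> 1 \<le> j \<and> j < n \<and> (i = Suc j \<or> j = Suc i) \<and> r \<ge> 1 \<and> s \<ge> 1 \<and> t \<ge> 1}"

definition yfree :: "nat \<Rightarrow> (nat \<Rightarrow> int) \<Rightarrow> (gen list \<Rightarrow> complex) ring" where
  "yfree n \<mu> = free_alg (adm n \<mu>)"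

definition yideal :: "nat \<Rightarrow> (nat \<Rightarrow> int) \<Rightarrow> (gen list \<Rightarrow> complex) set" where
  "yideal n \<mu> = genideal (yfree n \<mu>) (rels n \<mu>)"

definition yangian :: "nat \<Rightarrow> (nat \<Rightarrow> int) \<Rightarrow> (gen list \<Rightarrow> complex) set ring" where
  "yangian n \<mu> = (yfree n \<mu>) Quot (yideal n \<mu>)"

definition ycls :: "nat \<Rightarrow> (nat \<Rightarrow> int) \<Rightarrow> (gen list \<Rightarrow> complex) \<Rightarrow> (gen list \<Rightarrow> complex) set" where
  "ycls n \<mu> x = a_r_coset (yfree n \<mu>) (yideal n \<mu>) x"

end

theory Submission
  imports Defs
begin


definition splits :: "'a list \<Rightarrow> ('a list \<times> 'a list) set" where
  "splits w = (\<lambda>k. (take k w, drop k w)) ` {0..length w}"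

lemma mem_splits: "p \<in> splits w \<longleftrightarrow> fst p @ snd p = w"
proof
  assume "p \<in> splits w" then show "fst p @ snd p = w" by (auto simp: splits_def)
next
  assume h: "fst p @ snd p = w"
  then have "p = (take (length (fst p)) w, drop (length (fst p)) w)" by (cases p) auto
  moreover have "length (fst p) \<in> {0..length w}" using h by auto
  ultimately show "p \<in> splits w" unfolding splits_def by blast
qed

lemma finite_splits[simp]: "finite (splits w)"
  by (simp add: splits_def)

lemma fmul_splits: "fmul f k w = (\<Sum>p\<in>splits w. f (fst p) * k (snd p))"
proof -
  have inj: "inj_on (\<lambda>k. (take k w, drop k w)) {0..length w}"
    by (intro inj_onI) (metis atLeastAtMost_iff length_take min.absorb2 prod.inject)
  show ?thesis unfolding fmul_def splits_def
    by (simp add: sum.reindex[OF inj])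
qed

lemma fmul_assoc: "fmul (fmul f k) h = fmul f (fmul k h)"
proof
  fix w
  have L: "fmul (fmul f k) h w = (\<Sum>pq\<in>Sigma (splits w) (\<lambda>p. splits (fst p)).
             f (fst (snd pq)) * k (snd (snd pq)) * h (snd (fst pq)))"
    by (simp add: fmul_splits sum_distrib_right sum.Sigma split_def)
  have R: "fmul f (fmul k h) w = (\<Sum>pq\<in>Sigma (splits w) (\<lambda>p. splits (snd p)).
             f (fst (fst pq)) * (k (fst (snd pq)) * h (snd (snd pq))))"
    by (simp add: fmul_splits sum_distrib_left sum.Sigma split_def)
  show "fmul (fmul f k) h w = fmul f (fmul k h) w"
    unfolding L R
    apply (rule sum.reindex_bij_witness[where i="\<lambda>((a,b),(c,d)). ((a@c, d),(a,c))"
          and j="\<lambda>((x,y),(u,v)). ((u, v@y),(v,y))"])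
    by (auto simp: mem_splits)
qed

lemma fmul_nz: "fmul f k w \<noteq> 0 \<Longrightarrow> \<exists>p\<in>splits w. f (fst p) \<noteq> 0 \<and> k (snd p) \<noteq> 0"
  unfolding fmul_splits by (metis (no_types, lifting) mult_eq_0_iff sum.neutral)

lemma carrier_free_alg: "carrier (free_alg G) = {f. finite {w. f w \<noteq> 0} \<and> (\<forall>w. f w \<noteq> 0 \<longrightarrow> set w \<subseteq> G)}"
  by (simp add: free_alg_def)

lemma fmul_closed:
  assumes "a \<in> carrier (free_alg G)" "b \<in> carrier (free_alg G)"
  shows "fmul a b \<in> carrier (free_alg G)"
proof -
  have fa: "finite {w. a w \<noteq> 0}" and fb: "finite {w. b w \<noteq> 0}"
    and sa: "\<And>w. a w \<noteq> 0 \<Longrightarrow> set w \<subseteq> G" and sb: "\<And>w. b w \<noteq> 0 \<Longrightarrow> set w \<subseteq> G"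
    using assms by (auto simp: carrier_free_alg)
  have "{w. fmul a b w \<noteq> 0} \<subseteq> (\<lambda>(u,v). u @ v) ` ({w. a w \<noteq> 0} \<times> {w. b w \<noteq> 0})"
  proof
    fix w assume "w \<in> {w. fmul a b w \<noteq> 0}"
    then have "fmul a b w \<noteq> 0" by simp
    then obtain p where "p \<in> splits w" "a (fst p) \<noteq> 0" "b (snd p) \<noteq> 0" using fmul_nz by blast
    then show "w \<in> (\<lambda>(u,v). u @ v) ` ({w. a w \<noteq> 0} \<times> {w. b w \<noteq> 0})"
      by (auto simp: mem_splits image_iff intro!: bexI[of _ p])
  qed
  then have "finite {w. fmul a b w \<noteq> 0}"
    by (rule finite_subset) (use fa fb in auto)
  moreover have "set w \<subseteq> G" if nz: "fmul a b w \<noteq> 0" for w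
  proof -
    obtain p where "p \<in> splits w" "a (fst p) \<noteq> 0" "b (snd p) \<noteq> 0" using fmul_nz[OF nz] by blast
    then have "set (fst p) \<subseteq> G" "set (snd p) \<subseteq> G" using sa sb by auto
    moreover have "w = fst p @ snd p" using \<open>p \<in> splits w\<close> by (simp add: mem_splits)
    ultimately show ?thesis by simp
  qed
  ultimately show ?thesis by (simp add: carrier_free_alg)
qed

lemma fmul_one_left: "fmul fone f = f"
proof
  fix w
  have "fmul fone f w = (\<Sum>p\<in>splits w. if fst p = [] then f (snd p) else 0)"
    unfolding fmul_splits by (auto simp: fone_def fscal_def intro!: sum.cong)
  also have "\<dots> = (\<Sum>p\<in>{p\<in>splits w. fst p = []}. f (snd p))"
    by (simp add: sum.inter_filter)
  also have "{p\<in>splits w. fst p = []} = {([], w)}"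
    by (auto simp: mem_splits)
  finally show "fmul fone f w = f w" by simp
qed

lemma fmul_one_right: "fmul f fone = f"
proof
  fix w
  have "fmul f fone w = (\<Sum>p\<in>splits w. if snd p = [] then f (fst p) else 0)"
    unfolding fmul_splits by (auto simp: fone_def fscal_def intro!: sum.cong)
  also have "\<dots> = (\<Sum>p\<in>{p\<in>splits w. snd p = []}. f (fst p))"
    by (simp add: sum.inter_filter)
  also have "{p\<in>splits w. snd p = []} = {(w, [])}"
    by (auto simp: mem_splits)
  finally show "fmul f fone w = f w" by simp
qed

lemma ring_free_alg: "ring (free_alg G)"
proof (rule ringI)
  show "abelian_group (free_alg G)"
  proof (rule abelian_groupI)
    fix x y assume "x \<in> carrier (free_alg G)" "y \<in> carrier (free_alg G)"
    then show "x \<oplus>\<^bsub>free_alg G\<^esub> y \<in> carrier (free_alg G)"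
    proof -
      have "{w. x w + y w \<noteq> 0} \<subseteq> {w. x w \<noteq> 0} \<union> {w. y w \<noteq> 0}" by auto
      moreover have "\<forall>w. x w + y w \<noteq> 0 \<longrightarrow> set w \<subseteq> G"
        using \<open>x \<in> carrier (free_alg G)\<close> \<open>y \<in> carrier (free_alg G)\<close>
        by (metis (mono_tags, lifting) add_0 carrier_free_alg mem_Collect_eq)
      ultimately show ?thesis
        using \<open>x \<in> carrier (free_alg G)\<close> \<open>y \<in> carrier (free_alg G)\<close>
        by (simp add: free_alg_def fadd_def finite_subset)
    qed
  next
    show "\<zero>\<^bsub>free_alg G\<^esub> \<in> carrier (free_alg G)" by (simp add: free_alg_def fzero_def)
  next
    fix x y z show "x \<oplus>\<^bsub>free_alg G\<^esub> y \<oplus>\<^bsub>free_alg G\<^esub> z = x \<oplus>\<^bsub>free_alg G\<^esub> (y \<oplus>\<^bsub>free_alg G\<^esub> z)"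
      by (simp add: free_alg_def fadd_def add.assoc)
  next
    fix x y show "x \<oplus>\<^bsub>free_alg G\<^esub> y = y \<oplus>\<^bsub>free_alg G\<^esub> x"
      by (simp add: free_alg_def fadd_def add.commute)
  next
    fix x show "\<zero>\<^bsub>free_alg G\<^esub> \<oplus>\<^bsub>free_alg G\<^esub> x = x"
      by (simp add: free_alg_def fadd_def fzero_def)
  next
    fix x assume "x \<in> carrier (free_alg G)"
    then show "\<exists>y\<in>carrier (free_alg G). y \<oplus>\<^bsub>free_alg G\<^esub> x = \<zero>\<^bsub>free_alg G\<^esub>"
      by (intro bexI[of _ "\<lambda>w. - x w"]) (auto simp: free_alg_def fadd_def fzero_def)
  qed
next
  show "monoid (free_alg G)"
  proof (rule monoidI)
    fix x y assume "x \<in> carrier (free_alg G)" "y \<in> carrier (free_alg G)"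
    then show "x \<otimes>\<^bsub>free_alg G\<^esub> y \<in> carrier (free_alg G)"
      using fmul_closed by (simp add: free_alg_def)
  next
    show "\<one>\<^bsub>free_alg G\<^esub> \<in> carrier (free_alg G)"
      by (simp add: free_alg_def fone_def fscal_def)
  qed (simp_all add: free_alg_def fmul_assoc fmul_one_left fmul_one_right)
next
  fix x y z
  show "(x \<oplus>\<^bsub>free_alg G\<^esub> y) \<otimes>\<^bsub>free_alg G\<^esub> z = x \<otimes>\<^bsub>free_alg G\<^esub> z \<oplus>\<^bsub>free_alg G\<^esub> y \<otimes>\<^bsub>free_alg G\<^esub> z"
    by (simp add: free_alg_def fadd_def fmul_def distrib_right sum.distrib)
  show "z \<otimes>\<^bsub>free_alg G\<^esub> (x \<oplus>\<^bsub>free_alg G\<^esub> y) = z \<otimes>\<^bsub>free_alg G\<^esub> x \<oplus>\<^bsub>free_alg G\<^esub> z \<otimes>\<^bsub>free_alg G\<^esub> y"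
    by (simp add: free_alg_def fadd_def fmul_def distrib_left sum.distrib)
qed



lemma coset_transport:
  assumes add: "\<And>a b. T (a \<oplus>\<^bsub>R\<^esub> b) = T a \<oplus>\<^bsub>S\<^esub> T b"
  shows "T ` (I +>\<^bsub>R\<^esub> x) = (T ` I) +>\<^bsub>S\<^esub> (T x)"
  unfolding a_r_coset_def' by (simp add: image_UN add)

lemma quot_transport:
  fixes R :: "('a, 'c) ring_scheme" and S :: "('b, 'd) ring_scheme"
  assumes add: "\<And>a b. T (a \<oplus>\<^bsub>R\<^esub> b) = T a \<oplus>\<^bsub>S\<^esub> T b"
    and mul: "\<And>a b. T (a \<otimes>\<^bsub>R\<^esub> b) = T a \<otimes>\<^bsub>S\<^esub> T b"
    and one: "T \<one>\<^bsub>R\<^esub> = \<one>\<^bsub>S\<^esub>"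
    and carr: "T ` carrier R = carrier S"
    and inj: "inj T"
  shows "(\<lambda>X. T ` X) \<in> ring_iso (R Quot I) (S Quot (T ` I))"
proof (rule ring_iso_memI)
  note ct = coset_transport[of T R S, OF add]
  have carrQ: "carrier (R Quot I) = (\<lambda>x. I +>\<^bsub>R\<^esub> x) ` carrier R"
    by (auto simp: FactRing_def A_RCOSETS_def')
  have carrQ': "carrier (S Quot (T ` I)) = (\<lambda>x. (T ` I) +>\<^bsub>S\<^esub> x) ` carrier S"
    by (auto simp: FactRing_def A_RCOSETS_def')
  show "T ` x \<in> carrier (S Quot T ` I)" if "x \<in> carrier (R Quot I)" for x
  proof -
    have "x \<in> (\<lambda>x. I +>\<^bsub>R\<^esub> x) ` carrier R" using that by (simp only: carrQ)
    then obtain a where a: "a \<in> carrier R" "x = I +>\<^bsub>R\<^esub> a" by (rule imageE) simp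
    have "T a \<in> carrier S" using a(1) carr by (metis imageI)
    then show ?thesis unfolding carrQ' a(2) ct by (rule imageI)
  qed
  show "T ` (x \<otimes>\<^bsub>R Quot I\<^esub> y) = T ` x \<otimes>\<^bsub>S Quot T ` I\<^esub> T ` y" for x y
    by (simp add: FactRing_def rcoset_mult_def image_UN ct mul)
  show "T ` (x \<oplus>\<^bsub>R Quot I\<^esub> y) = T ` x \<oplus>\<^bsub>S Quot T ` I\<^esub> T ` y" for x y
  proof -
    have "T ` (\<Union>h\<in>x. \<Union>k\<in>y. {h \<oplus>\<^bsub>R\<^esub> k}) = (\<Union>h\<in>T ` x. \<Union>k\<in>T ` y. {h \<oplus>\<^bsub>S\<^esub> k})"
    proof
      show "T ` (\<Union>h\<in>x. \<Union>k\<in>y. {h \<oplus>\<^bsub>R\<^esub> k}) \<subseteq> (\<Union>h\<in>T ` x. \<Union>k\<in>T ` y. {h \<oplus>\<^bsub>S\<^esub> k})"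
        by (auto simp: add) blast
      show "(\<Union>h\<in>T ` x. \<Union>k\<in>T ` y. {h \<oplus>\<^bsub>S\<^esub> k}) \<subseteq> T ` (\<Union>h\<in>x. \<Union>k\<in>y. {h \<oplus>\<^bsub>R\<^esub> k})"
        by (auto simp: add[symmetric])
    qed
    then show ?thesis by (simp add: FactRing_def set_add_def')
  qed
  show "T ` \<one>\<^bsub>R Quot I\<^esub> = \<one>\<^bsub>S Quot T ` I\<^esub>"
    by (simp add: FactRing_def ct one)
  show "bij_betw ((`) T) (carrier (R Quot I)) (carrier (S Quot T ` I))"
  proof (rule bij_betw_imageI)
    show "inj_on ((`) T) (carrier (R Quot I))"
      by (meson inj inj_image_eq_iff inj_onI)
    show "(`) T ` carrier (R Quot I) = carrier (S Quot T ` I)"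
      unfolding carrQ carrQ' image_image ct by (simp add: carr[symmetric] image_image)
  qed
qed

lemma genideal_image_sub:
  fixes R :: "('a, 'c) ring_scheme" and S :: "('b, 'd) ring_scheme"
  assumes r1: "ring R" and r2: "ring S" and h: "T \<in> ring_hom R S" and A: "A \<subseteq> carrier R"
      and c: "T ` carrier R \<subseteq> carrier S"
  shows "T ` genideal R A \<subseteq> genideal S (T ` A)"
proof -
    interpret hh: ring_hom_ring R S T using r1 r2 h by (rule ring_hom_ringI2)
    have TA: "T ` A \<subseteq> carrier S" using A c by auto
    have J: "ideal (genideal S (T ` A)) S" using ring.genideal_ideal[OF r2 TA] .
    have V: "ideal {r \<in> carrier R. T r \<in> genideal S (T ` A)} R" by (rule hh.ideal_vimage[OF J])
    have "A \<subseteq> {r \<in> carrier R. T r \<in> genideal S (T ` A)}"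
      using A ring.genideal_self[OF r2 TA] by auto
    then have "genideal R A \<subseteq> {r \<in> carrier R. T r \<in> genideal S (T ` A)}"
      by (rule ring.genideal_minimal[OF r1 V])
    then show "T ` genideal R A \<subseteq> genideal S (T ` A)" by auto
qed

lemma genideal_transport:
  fixes R :: "('a, 'c) ring_scheme" and S :: "('b, 'd) ring_scheme"
  assumes rR: "ring R" and rS: "ring S"
    and hT: "T \<in> ring_hom R S" and hT': "T' \<in> ring_hom S R"
    and inv1: "\<And>x. T' (T x) = x" and inv2: "\<And>y. T (T' y) = y"
    and carr: "T ` carrier R = carrier S" and carr': "T' ` carrier S = carrier R"
  shows "T ` genideal R A = genideal S (T ` A)"
proof (cases "A \<subseteq> carrier R")
  case True
  have 1: "T ` genideal R A \<subseteq> genideal S (T ` A)"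
    using genideal_image_sub[OF rR rS hT True equalityD1[OF carr]] .
  have TA: "T ` A \<subseteq> carrier S" using True carr by auto
  have "T' ` genideal S (T ` A) \<subseteq> genideal R (T' ` T ` A)"
    using genideal_image_sub[OF rS rR hT' TA equalityD1[OF carr']] .
  also have "T' ` T ` A = A" by (simp add: image_image inv1)
  finally have "T ` T' ` genideal S (T ` A) \<subseteq> T ` genideal R A" by (rule image_mono)
  then have "genideal S (T ` A) \<subseteq> T ` genideal R A" by (simp add: image_image inv2)
  with 1 show ?thesis by blast
next
  case False
  have u1: "genideal R A = UNIV"
  proof -
    have E: "{I. ideal I R \<and> A \<subseteq> I} = {}"
    proof (rule ccontr)
      assume "{I. ideal I R \<and> A \<subseteq> I} \<noteq> {}"
      then obtain I where i1: "ideal I R" and i2: "A \<subseteq> I" by blast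
      then have "A \<subseteq> carrier R" using ideal.Icarr[OF i1] by blast
      then show False using False by simp
    qed
    show ?thesis unfolding genideal_def E by simp
  qed
  have "\<not> T ` A \<subseteq> carrier S"
  proof
    assume "T ` A \<subseteq> carrier S"
    then have "T' ` T ` A \<subseteq> carrier R" using carr' by auto
    then show False using False by (simp add: image_image inv1)
  qed
  then have u2: "genideal S (T ` A) = UNIV"
  proof -
    have E: "{I. ideal I S \<and> T ` A \<subseteq> I} = {}"
    proof (rule ccontr)
      assume "{I. ideal I S \<and> T ` A \<subseteq> I} \<noteq> {}"
      then obtain I where i1: "ideal I S" and i2: "T ` A \<subseteq> I" by blast
      then have "T ` A \<subseteq> carrier S" using ideal.Icarr[OF i1] by blast
      then show False using \<open>\<not> T ` A \<subseteq> carrier S\<close> by simp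
    qed
    show ?thesis unfolding genideal_def E by simp
  qed
  have "surj T" by (metis inv2 surjI)
  then show ?thesis using u1 u2 by simp
qed



fun sh :: "(nat \<Rightarrow> int) \<Rightarrow> gen \<Rightarrow> gen" where
  "sh c (E i r) = E i r"
| "sh c (F i r) = F i r"
| "sh c (D i s) = D i (s - c i)"
| "sh c (Dt i s) = Dt i (s + c i)"

definition neg :: "(nat \<Rightarrow> int) \<Rightarrow> nat \<Rightarrow> int" where
  "neg c = (\<lambda>i. - c i)"

definition Tm :: "(nat \<Rightarrow> int) \<Rightarrow> (gen list \<Rightarrow> complex) \<Rightarrow> gen list \<Rightarrow> complex" where
  "Tm c f = (\<lambda>w. f (map (sh (neg c)) w))"

lemma sh_neg1[simp]: "sh (neg c) (sh c x) = x"
  by (cases x) (auto simp: neg_def)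

lemma sh_neg2[simp]: "sh c (sh (neg c) x) = x"
  by (cases x) (auto simp: neg_def)

lemma sh_comp1[simp]: "sh (neg c) \<circ> sh c = id"
  by (rule ext) simp

lemma sh_comp2[simp]: "sh c \<circ> sh (neg c) = id"
  by (rule ext) simp

lemma neg_neg[simp]: "neg (neg c) = c"
  by (simp add: neg_def)

lemma map_sh_neg1[simp]: "map (sh (neg c)) (map (sh c) w) = w"
  by (induction w) auto

lemma map_sh_neg2[simp]: "map (sh c) (map (sh (neg c)) w) = w"
  by (induction w) auto

lemma Tm_inv[simp]: "Tm (neg c) (Tm c f) = f"
  by (simp add: Tm_def)

lemma Tm_inv2[simp]: "Tm c (Tm (neg c) f) = f"
  by (simp add: Tm_def)

lemma Tm_fadd: "Tm c (fadd a b) = fadd (Tm c a) (Tm c b)"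
  by (simp add: Tm_def fadd_def)

lemma Tm_fsub: "Tm c (fsub a b) = fsub (Tm c a) (Tm c b)"
  by (simp add: Tm_def fsub_def)

lemma Tm_fsmult: "Tm c (fsmult z a) = fsmult z (Tm c a)"
  by (simp add: Tm_def fsmult_def)

lemma Tm_fsum: "Tm c (fsum X A) = fsum (\<lambda>t. Tm c (X t)) A"
  by (simp add: Tm_def fsum_def)

lemma Tm_fmul: "Tm c (fmul a b) = fmul (Tm c a) (Tm c b)"
  by (simp add: Tm_def fmul_def take_map drop_map)

lemma Tm_fcomm: "Tm c (fcomm a b) = fcomm (Tm c a) (Tm c b)"
  by (simp add: fcomm_def Tm_fsub Tm_fmul)

lemma Tm_fscal: "Tm c (fscal z) = fscal z"
  by (simp add: Tm_def fscal_def)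

lemma Tm_fone: "Tm c fone = fone"
  by (simp add: fone_def Tm_fscal)

lemma Tm_fzero: "Tm c fzero = fzero"
  by (simp add: Tm_def fzero_def)

lemma Tm_fgen: "Tm c (fgen x) = fgen (sh c x)"
proof
  fix w
  have "map (sh (neg c)) w = [x] \<longleftrightarrow> w = [sh c x]"
  proof
    assume "map (sh (neg c)) w = [x]"
    then have "map (sh c) (map (sh (neg c)) w) = [sh c x]" by simp
    then show "w = [sh c x]" by simp
  qed simp
  then show "Tm c (fgen x) w = fgen (sh c x) w" by (simp add: Tm_def fgen_def)
qed

lemma Tm_if: "Tm c (if P then a else b) = (if P then Tm c a else Tm c b)"
  by simp

lemmas Tm_simps = Tm_fadd Tm_fsub Tm_fsmult Tm_fsum Tm_fmul Tm_fcomm Tm_fscal Tm_fone Tm_fzero Tm_fgen Tm_if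

lemma Tm_add_global: "Tm c (a \<oplus>\<^bsub>free_alg G\<^esub> b) = Tm c a \<oplus>\<^bsub>free_alg G'\<^esub> Tm c b"
  by (simp add: free_alg_def Tm_fadd)

lemma Tm_mul_global: "Tm c (a \<otimes>\<^bsub>free_alg G\<^esub> b) = Tm c a \<otimes>\<^bsub>free_alg G'\<^esub> Tm c b"
  by (simp add: free_alg_def Tm_fmul)

lemma Tm_one_global: "Tm c \<one>\<^bsub>free_alg G\<^esub> = \<one>\<^bsub>free_alg G'\<^esub>"
  by (simp add: free_alg_def Tm_fone)

lemma Tm_carrier:
  assumes G: "\<And>x. x \<in> G \<Longrightarrow> sh c x \<in> G'"
    and f: "f \<in> carrier (free_alg G)"
  shows "Tm c f \<in> carrier (free_alg G')"
proof -
  have fin: "finite {w. f w \<noteq> 0}" and s: "\<And>w. f w \<noteq> 0 \<Longrightarrow> set w \<subseteq> G"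
    using f by (auto simp: carrier_free_alg)
  have inj: "inj (map (sh (neg c)))"
    by (metis injI map_sh_neg2)
  have "{w. Tm c f w \<noteq> 0} = map (sh (neg c)) -` {w. f w \<noteq> 0}"
    by (auto simp: Tm_def)
  then have "finite {w. Tm c f w \<noteq> 0}"
    using finite_vimageI[OF fin inj] by simp
  moreover have "set w \<subseteq> G'" if nz: "Tm c f w \<noteq> 0" for w
  proof
    fix a assume a: "a \<in> set w"
    have "set (map (sh (neg c)) w) \<subseteq> G" by (rule s) (use nz in \<open>simp add: Tm_def\<close>)
    then have "sh (neg c) a \<in> G" using a by auto
    then have "sh c (sh (neg c) a) \<in> G'" by (rule G)
    then show "a \<in> G'" by simp
  qed
  ultimately show ?thesis by (simp add: carrier_free_alg)
qed

lemma fsum_shift_eq: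
  fixes a b a' b' d :: int
  assumes "a' = a + d" "b' = b + d" "\<And>t. Y t = X (t - d)"
  shows "fsum X {a..b} = fsum Y {a'..b'}"
proof -
  have "(\<Sum>t\<in>{a..b}. X t w) = (\<Sum>t\<in>{a'..b'}. Y t w)" for w
    by (rule sum.reindex_bij_witness[where i="\<lambda>t. t - d" and j="\<lambda>t. t + d"]) (auto simp: assms)
  then show ?thesis by (simp add: fsum_def)
qed


lemma fam0:
  fixes n :: nat and \<mu>1 \<mu>2 :: "nat \<Rightarrow> int"
  assumes x: "x \<in> {fsub (g (D i (\<mu>1 i))) fone | i. 1 \<le> i \<and> i \<le> n}"
    and hc: "\<And>i. 1 \<le> i \<Longrightarrow> i < n \<Longrightarrow> \<mu>1 (Suc i) - \<mu>2 (Suc i) = \<mu>1 i - \<mu>2 i"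
  shows "Tm (\<lambda>i. \<mu>1 i - \<mu>2 i) x \<in> {fsub (g (D i (\<mu>2 i))) fone | i. 1 \<le> i \<and> i \<le> n}"
proof -
  from x obtain i where xe: "x = fsub (g (D i (\<mu>1 i))) fone" and cd: "1 \<le> i \<and> i \<le> n" by blast
  have e: "Tm (\<lambda>i. \<mu>1 i - \<mu>2 i) x = fsub (g (D i (\<mu>2 i))) fone"
    unfolding xe by (simp only: Tm_fadd Tm_fsub Tm_fsmult Tm_fcomm Tm_fgen Tm_fmul Tm_fone Tm_fzero Tm_if sh.simps) (use cd hc in \<open>simp_all add: Tm_simps\<close>)?
  show ?thesis unfolding e
    apply (rule CollectI)
    apply (rule exI[where x="i"])
    apply (rule conjI[OF refl])
    using cd hc by auto
qed

lemma fam1: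
  fixes n :: nat and \<mu>1 \<mu>2 :: "nat \<Rightarrow> int"
  assumes x: "x \<in> {fadd (fsum (\<lambda>t. fmul (g (D i t)) (g (Dt i (r - t)))) {\<mu>1 i .. r + \<mu>1 i})
         (if r = 0 then fone else fzero) | i r. 1 \<le> i \<and> i \<le> n \<and> r \<ge> 0}"
    and hc: "\<And>i. 1 \<le> i \<Longrightarrow> i < n \<Longrightarrow> \<mu>1 (Suc i) - \<mu>2 (Suc i) = \<mu>1 i - \<mu>2 i"
  shows "Tm (\<lambda>i. \<mu>1 i - \<mu>2 i) x \<in> {fadd (fsum (\<lambda>t. fmul (g (D i t)) (g (Dt i (r - t)))) {\<mu>2 i .. r + \<mu>2 i})
         (if r = 0 then fone else fzero) | i r. 1 \<le> i \<and> i \<le> n \<and> r \<ge> 0}"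
proof -
  from x obtain i r where xe: "x = fadd (fsum (\<lambda>t. fmul (g (D i t)) (g (Dt i (r - t)))) {\<mu>1 i .. r + \<mu>1 i})
         (if r = 0 then fone else fzero)" and cd: "1 \<le> i \<and> i \<le> n \<and> r \<ge> 0" by blast
  have S: "Tm (\<lambda>i. \<mu>1 i - \<mu>2 i) (fsum (\<lambda>t. fmul (g (D i t)) (g (Dt i (r - t)))) {\<mu>1 i .. r + \<mu>1 i}) = fsum (\<lambda>t. fmul (g (D i t)) (g (Dt i (r - t)))) {\<mu>2 i .. r + \<mu>2 i}"
    unfolding Tm_fsum by (rule fsum_shift_eq[where d="\<mu>2 i - \<mu>1 i"]) (use cd hc in \<open>simp_all add: Tm_simps algebra_simps\<close>)
  have e: "Tm (\<lambda>i. \<mu>1 i - \<mu>2 i) x = fadd (fsum (\<lambda>t. fmul (g (D i t)) (g (Dt i (r - t)))) {\<mu>2 i .. r + \<mu>2 i})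
         (if r = 0 then fone else fzero)"
    unfolding xe by (simp only: Tm_fadd Tm_fsub Tm_fsmult Tm_fcomm Tm_fgen Tm_fmul Tm_fone Tm_fzero Tm_if sh.simps S) (use cd hc in \<open>simp_all add: Tm_simps\<close>)?
  show ?thesis unfolding e
    apply (rule CollectI)
    apply (rule exI[where x="i"])
    apply (rule exI[where x="r"])
    apply (rule conjI[OF refl])
    using cd hc by auto
qed

lemma fam2:
  fixes n :: nat and \<mu>1 \<mu>2 :: "nat \<Rightarrow> int"
  assumes x: "x \<in> {fcomm (g (D i r)) (g (D j s)) | i j r s. 1 \<le> i \<and> i \<le> n \<and> 1 \<le> j \<and> j \<le> n \<and> r \<ge> \<mu>1 i \<and> s \<ge> \<mu>1 j}"
    and hc: "\<And>i. 1 \<le> i \<Longrightarrow> i < n \<Longrightarrow> \<mu>1 (Suc i) - \<mu>2 (Suc i) = \<mu>1 i - \<mu>2 i"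
  shows "Tm (\<lambda>i. \<mu>1 i - \<mu>2 i) x \<in> {fcomm (g (D i r)) (g (D j s)) | i j r s. 1 \<le> i \<and> i \<le> n \<and> 1 \<le> j \<and> j \<le> n \<and> r \<ge> \<mu>2 i \<and> s \<ge> \<mu>2 j}"
proof -
  from x obtain i j r s where xe: "x = fcomm (g (D i r)) (g (D j s))" and cd: "1 \<le> i \<and> i \<le> n \<and> 1 \<le> j \<and> j \<le> n \<and> r \<ge> \<mu>1 i \<and> s \<ge> \<mu>1 j" by blast
  have e: "Tm (\<lambda>i. \<mu>1 i - \<mu>2 i) x = fcomm (g (D i (r - (\<mu>1 i - \<mu>2 i)))) (g (D j (s - (\<mu>1 j - \<mu>2 j))))"
    unfolding xe by (simp only: Tm_fadd Tm_fsub Tm_fsmult Tm_fcomm Tm_fgen Tm_fmul Tm_fone Tm_fzero Tm_if sh.simps) (use cd hc in \<open>simp_all add: Tm_simps\<close>)?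
  show ?thesis unfolding e
    apply (rule CollectI)
    apply (rule exI[where x="i"])
    apply (rule exI[where x="j"])
    apply (rule exI[where x="(r - (\<mu>1 i - \<mu>2 i))"])
    apply (rule exI[where x="(s - (\<mu>1 j - \<mu>2 j))"])
    apply (rule conjI[OF refl])
    using cd hc by auto
qed

lemma fam3:
  fixes n :: nat and \<mu>1 \<mu>2 :: "nat \<Rightarrow> int"
  assumes x: "x \<in> {fadd (fcomm (g (E i r)) (g (F j s)))
         (fsmult (delta i j)
            (fsum (\<lambda>t. fmul (g (Dt i t)) (g (D (Suc i) (r + s - t - 1))))
                  {- \<mu>1 i .. r + s - 1 - \<mu>1 (Suc i)})) | i j r s. 1 \<le> i \<and> i < n \<and> 1 \<le> j \<and> j < n \<and> r \<ge> 1 \<and> s \<ge> 1}"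
    and hc: "\<And>i. 1 \<le> i \<Longrightarrow> i < n \<Longrightarrow> \<mu>1 (Suc i) - \<mu>2 (Suc i) = \<mu>1 i - \<mu>2 i"
  shows "Tm (\<lambda>i. \<mu>1 i - \<mu>2 i) x \<in> {fadd (fcomm (g (E i r)) (g (F j s)))
         (fsmult (delta i j)
            (fsum (\<lambda>t. fmul (g (Dt i t)) (g (D (Suc i) (r + s - t - 1))))
                  {- \<mu>2 i .. r + s - 1 - \<mu>2 (Suc i)})) | i j r s. 1 \<le> i \<and> i < n \<and> 1 \<le> j \<and> j < n \<and> r \<ge> 1 \<and> s \<ge> 1}"
proof -
  from x obtain i j r s where xe: "x = fadd (fcomm (g (E i r)) (g (F j s)))
         (fsmult (delta i j)
            (fsum (\<lambda>t. fmul (g (Dt i t)) (g (D (Suc i) (r + s - t - 1))))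
                  {- \<mu>1 i .. r + s - 1 - \<mu>1 (Suc i)}))" and cd: "1 \<le> i \<and> i < n \<and> 1 \<le> j \<and> j < n \<and> r \<ge> 1 \<and> s \<ge> 1" by blast
  have S: "Tm (\<lambda>i. \<mu>1 i - \<mu>2 i) (fsum (\<lambda>t. fmul (g (Dt i t)) (g (D (Suc i) (r + s - t - 1))))
                  {- \<mu>1 i .. r + s - 1 - \<mu>1 (Suc i)}) = fsum (\<lambda>t. fmul (g (Dt i t)) (g (D (Suc i) (r + s - t - 1))))
                  {- \<mu>2 i .. r + s - 1 - \<mu>2 (Suc i)}"
    unfolding Tm_fsum by (rule fsum_shift_eq[where d="\<mu>1 i - \<mu>2 i"]) (use cd hc in \<open>simp_all add: Tm_simps algebra_simps\<close>)
  have e: "Tm (\<lambda>i. \<mu>1 i - \<mu>2 i) x = fadd (fcomm (g (E i r)) (g (F j s)))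
         (fsmult (delta i j)
            (fsum (\<lambda>t. fmul (g (Dt i t)) (g (D (Suc i) (r + s - t - 1))))
                  {- \<mu>2 i .. r + s - 1 - \<mu>2 (Suc i)}))"
    unfolding xe by (simp only: Tm_fadd Tm_fsub Tm_fsmult Tm_fcomm Tm_fgen Tm_fmul Tm_fone Tm_fzero Tm_if sh.simps S) (use cd hc in \<open>simp_all add: Tm_simps\<close>)?
  show ?thesis unfolding e
    apply (rule CollectI)
    apply (rule exI[where x="i"])
    apply (rule exI[where x="j"])
    apply (rule exI[where x="r"])
    apply (rule exI[where x="s"])
    apply (rule conjI[OF refl])
    using cd hc by auto
qed

lemma fam4:
  fixes n :: nat and \<mu>1 \<mu>2 :: "nat \<Rightarrow> int"
  assumes x: "x \<in> {fsub (fcomm (g (D i r)) (g (E j s)))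
         (fsmult (delta i (Suc j) - delta i j)
            (fsum (\<lambda>t. fmul (g (D i t)) (g (E j (r + s - t - 1)))) {\<mu>1 i .. r - 1})) | i j r s. 1 \<le> i \<and> i \<le> n \<and> 1 \<le> j \<and> j < n \<and> r \<ge> \<mu>1 i \<and> s \<ge> 1}"
    and hc: "\<And>i. 1 \<le> i \<Longrightarrow> i < n \<Longrightarrow> \<mu>1 (Suc i) - \<mu>2 (Suc i) = \<mu>1 i - \<mu>2 i"
  shows "Tm (\<lambda>i. \<mu>1 i - \<mu>2 i) x \<in> {fsub (fcomm (g (D i r)) (g (E j s)))
         (fsmult (delta i (Suc j) - delta i j)
            (fsum (\<lambda>t. fmul (g (D i t)) (g (E j (r + s - t - 1)))) {\<mu>2 i .. r - 1})) | i j r s. 1 \<le> i \<and> i \<le> n \<and> 1 \<le> j \<and> j < n \<and> r \<ge> \<mu>2 i \<and> s \<ge> 1}"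
proof -
  from x obtain i j r s where xe: "x = fsub (fcomm (g (D i r)) (g (E j s)))
         (fsmult (delta i (Suc j) - delta i j)
            (fsum (\<lambda>t. fmul (g (D i t)) (g (E j (r + s - t - 1)))) {\<mu>1 i .. r - 1}))" and cd: "1 \<le> i \<and> i \<le> n \<and> 1 \<le> j \<and> j < n \<and> r \<ge> \<mu>1 i \<and> s \<ge> 1" by blast
  have S: "Tm (\<lambda>i. \<mu>1 i - \<mu>2 i) (fsum (\<lambda>t. fmul (g (D i t)) (g (E j (r + s - t - 1)))) {\<mu>1 i .. r - 1}) = fsum (\<lambda>t. fmul (g (D i t)) (g (E j ((r - (\<mu>1 i - \<mu>2 i)) + s - t - 1)))) {\<mu>2 i .. (r - (\<mu>1 i - \<mu>2 i)) - 1}"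
    unfolding Tm_fsum by (rule fsum_shift_eq[where d="\<mu>2 i - \<mu>1 i"]) (use cd hc in \<open>simp_all add: Tm_simps algebra_simps\<close>)
  have e: "Tm (\<lambda>i. \<mu>1 i - \<mu>2 i) x = fsub (fcomm (g (D i (r - (\<mu>1 i - \<mu>2 i)))) (g (E j s)))
         (fsmult (delta i (Suc j) - delta i j)
            (fsum (\<lambda>t. fmul (g (D i t)) (g (E j ((r - (\<mu>1 i - \<mu>2 i)) + s - t - 1)))) {\<mu>2 i .. (r - (\<mu>1 i - \<mu>2 i)) - 1}))"
    unfolding xe by (simp only: Tm_fadd Tm_fsub Tm_fsmult Tm_fcomm Tm_fgen Tm_fmul Tm_fone Tm_fzero Tm_if sh.simps S) (use cd hc in \<open>simp_all add: Tm_simps\<close>)?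
  show ?thesis unfolding e
    apply (rule CollectI)
    apply (rule exI[where x="i"])
    apply (rule exI[where x="j"])
    apply (rule exI[where x="(r - (\<mu>1 i - \<mu>2 i))"])
    apply (rule exI[where x="s"])
    apply (rule conjI[OF refl])
    using cd hc by auto
qed

lemma fam5:
  fixes n :: nat and \<mu>1 \<mu>2 :: "nat \<Rightarrow> int"
  assumes x: "x \<in> {fsub (fcomm (g (D i r)) (g (F j s)))
         (fsmult (delta i j - delta i (Suc j))
            (fsum (\<lambda>t. fmul (g (F j (r + s - t - 1))) (g (D i t))) {\<mu>1 i .. r - 1})) | i j r s. 1 \<le> i \<and> i \<le> n \<and> 1 \<le> j \<and> j < n \<and> r \<ge> \<mu>1 i \<and> s \<ge> 1}"
    and hc: "\<And>i. 1 \<le> i \<Longrightarrow> i < n \<Longrightarrow> \<mu>1 (Suc i) - \<mu>2 (Suc i) = \<mu>1 i - \<mu>2 i"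
  shows "Tm (\<lambda>i. \<mu>1 i - \<mu>2 i) x \<in> {fsub (fcomm (g (D i r)) (g (F j s)))
         (fsmult (delta i j - delta i (Suc j))
            (fsum (\<lambda>t. fmul (g (F j (r + s - t - 1))) (g (D i t))) {\<mu>2 i .. r - 1})) | i j r s. 1 \<le> i \<and> i \<le> n \<and> 1 \<le> j \<and> j < n \<and> r \<ge> \<mu>2 i \<and> s \<ge> 1}"
proof -
  from x obtain i j r s where xe: "x = fsub (fcomm (g (D i r)) (g (F j s)))
         (fsmult (delta i j - delta i (Suc j))
            (fsum (\<lambda>t. fmul (g (F j (r + s - t - 1))) (g (D i t))) {\<mu>1 i .. r - 1}))" and cd: "1 \<le> i \<and> i \<le> n \<and> 1 \<le> j \<and> j < n \<and> r \<ge> \<mu>1 i \<and> s \<ge> 1" by blast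
  have S: "Tm (\<lambda>i. \<mu>1 i - \<mu>2 i) (fsum (\<lambda>t. fmul (g (F j (r + s - t - 1))) (g (D i t))) {\<mu>1 i .. r - 1}) = fsum (\<lambda>t. fmul (g (F j ((r - (\<mu>1 i - \<mu>2 i)) + s - t - 1))) (g (D i t))) {\<mu>2 i .. (r - (\<mu>1 i - \<mu>2 i)) - 1}"
    unfolding Tm_fsum by (rule fsum_shift_eq[where d="\<mu>2 i - \<mu>1 i"]) (use cd hc in \<open>simp_all add: Tm_simps algebra_simps\<close>)
  have e: "Tm (\<lambda>i. \<mu>1 i - \<mu>2 i) x = fsub (fcomm (g (D i (r - (\<mu>1 i - \<mu>2 i)))) (g (F j s)))
         (fsmult (delta i j - delta i (Suc j))
            (fsum (\<lambda>t. fmul (g (F j ((r - (\<mu>1 i - \<mu>2 i)) + s - t - 1))) (g (D i t))) {\<mu>2 i .. (r - (\<mu>1 i - \<mu>2 i)) - 1}))"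
    unfolding xe by (simp only: Tm_fadd Tm_fsub Tm_fsmult Tm_fcomm Tm_fgen Tm_fmul Tm_fone Tm_fzero Tm_if sh.simps S) (use cd hc in \<open>simp_all add: Tm_simps\<close>)?
  show ?thesis unfolding e
    apply (rule CollectI)
    apply (rule exI[where x="i"])
    apply (rule exI[where x="j"])
    apply (rule exI[where x="(r - (\<mu>1 i - \<mu>2 i))"])
    apply (rule exI[where x="s"])
    apply (rule conjI[OF refl])
    using cd hc by auto
qed

lemma fam6:
  fixes n :: nat and \<mu>1 \<mu>2 :: "nat \<Rightarrow> int"
  assumes x: "x \<in> {fsub (fcomm (g (E i r)) (g (E i s)))
         (fsub (fsum (\<lambda>t. fmul (g (E i t)) (g (E i (r + s - t - 1)))) {1 .. r - 1})
               (fsum (\<lambda>t. fmul (g (E i t)) (g (E i (r + s - t - 1)))) {1 .. s - 1})) | i r s. 1 \<le> i \<and> i < n \<and> r \<ge> 1 \<and> s \<ge> 1}"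
    and hc: "\<And>i. 1 \<le> i \<Longrightarrow> i < n \<Longrightarrow> \<mu>1 (Suc i) - \<mu>2 (Suc i) = \<mu>1 i - \<mu>2 i"
  shows "Tm (\<lambda>i. \<mu>1 i - \<mu>2 i) x \<in> {fsub (fcomm (g (E i r)) (g (E i s)))
         (fsub (fsum (\<lambda>t. fmul (g (E i t)) (g (E i (r + s - t - 1)))) {1 .. r - 1})
               (fsum (\<lambda>t. fmul (g (E i t)) (g (E i (r + s - t - 1)))) {1 .. s - 1})) | i r s. 1 \<le> i \<and> i < n \<and> r \<ge> 1 \<and> s \<ge> 1}"
proof -
  from x obtain i r s where xe: "x = fsub (fcomm (g (E i r)) (g (E i s)))
         (fsub (fsum (\<lambda>t. fmul (g (E i t)) (g (E i (r + s - t - 1)))) {1 .. r - 1})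
               (fsum (\<lambda>t. fmul (g (E i t)) (g (E i (r + s - t - 1)))) {1 .. s - 1}))" and cd: "1 \<le> i \<and> i < n \<and> r \<ge> 1 \<and> s \<ge> 1" by blast
  have e: "Tm (\<lambda>i. \<mu>1 i - \<mu>2 i) x = fsub (fcomm (g (E i r)) (g (E i s)))
         (fsub (fsum (\<lambda>t. fmul (g (E i t)) (g (E i (r + s - t - 1)))) {1 .. r - 1})
               (fsum (\<lambda>t. fmul (g (E i t)) (g (E i (r + s - t - 1)))) {1 .. s - 1}))"
    unfolding xe by (simp only: Tm_fadd Tm_fsub Tm_fsmult Tm_fcomm Tm_fgen Tm_fmul Tm_fone Tm_fzero Tm_if sh.simps) (use cd hc in \<open>simp_all add: Tm_simps\<close>)?
  show ?thesis unfolding e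
    apply (rule CollectI)
    apply (rule exI[where x="i"])
    apply (rule exI[where x="r"])
    apply (rule exI[where x="s"])
    apply (rule conjI[OF refl])
    using cd hc by auto
qed

lemma fam7:
  fixes n :: nat and \<mu>1 \<mu>2 :: "nat \<Rightarrow> int"
  assumes x: "x \<in> {fsub (fcomm (g (F i r)) (g (F i s)))
         (fsub (fsum (\<lambda>t. fmul (g (F i (r + s - t - 1))) (g (F i t))) {1 .. s - 1})
               (fsum (\<lambda>t. fmul (g (F i (r + s - t - 1))) (g (F i t))) {1 .. r - 1})) | i r s. 1 \<le> i \<and> i < n \<and> r \<ge> 1 \<and> s \<ge> 1}"
    and hc: "\<And>i. 1 \<le> i \<Longrightarrow> i < n \<Longrightarrow> \<mu>1 (Suc i) - \<mu>2 (Suc i) = \<mu>1 i - \<mu>2 i"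
  shows "Tm (\<lambda>i. \<mu>1 i - \<mu>2 i) x \<in> {fsub (fcomm (g (F i r)) (g (F i s)))
         (fsub (fsum (\<lambda>t. fmul (g (F i (r + s - t - 1))) (g (F i t))) {1 .. s - 1})
               (fsum (\<lambda>t. fmul (g (F i (r + s - t - 1))) (g (F i t))) {1 .. r - 1})) | i r s. 1 \<le> i \<and> i < n \<and> r \<ge> 1 \<and> s \<ge> 1}"
proof -
  from x obtain i r s where xe: "x = fsub (fcomm (g (F i r)) (g (F i s)))
         (fsub (fsum (\<lambda>t. fmul (g (F i (r + s - t - 1))) (g (F i t))) {1 .. s - 1})
               (fsum (\<lambda>t. fmul (g (F i (r + s - t - 1))) (g (F i t))) {1 .. r - 1}))" and cd: "1 \<le> i \<and> i < n \<and> r \<ge> 1 \<and> s \<ge> 1" by blast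
  have e: "Tm (\<lambda>i. \<mu>1 i - \<mu>2 i) x = fsub (fcomm (g (F i r)) (g (F i s)))
         (fsub (fsum (\<lambda>t. fmul (g (F i (r + s - t - 1))) (g (F i t))) {1 .. s - 1})
               (fsum (\<lambda>t. fmul (g (F i (r + s - t - 1))) (g (F i t))) {1 .. r - 1}))"
    unfolding xe by (simp only: Tm_fadd Tm_fsub Tm_fsmult Tm_fcomm Tm_fgen Tm_fmul Tm_fone Tm_fzero Tm_if sh.simps) (use cd hc in \<open>simp_all add: Tm_simps\<close>)?
  show ?thesis unfolding e
    apply (rule CollectI)
    apply (rule exI[where x="i"])
    apply (rule exI[where x="r"])
    apply (rule exI[where x="s"])
    apply (rule conjI[OF refl])
    using cd hc by auto
qed

lemma fam8:
  fixes n :: nat and \<mu>1 \<mu>2 :: "nat \<Rightarrow> int"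
  assumes x: "x \<in> {fadd (fsub (fcomm (g (E i (r + 1))) (g (E (Suc i) s)))
               (fcomm (g (E i r)) (g (E (Suc i) (s + 1)))))
         (fmul (g (E i r)) (g (E (Suc i) s))) | i r s. 1 \<le> i \<and> Suc i < n \<and> r \<ge> 1 \<and> s \<ge> 1}"
    and hc: "\<And>i. 1 \<le> i \<Longrightarrow> i < n \<Longrightarrow> \<mu>1 (Suc i) - \<mu>2 (Suc i) = \<mu>1 i - \<mu>2 i"
  shows "Tm (\<lambda>i. \<mu>1 i - \<mu>2 i) x \<in> {fadd (fsub (fcomm (g (E i (r + 1))) (g (E (Suc i) s)))
               (fcomm (g (E i r)) (g (E (Suc i) (s + 1)))))
         (fmul (g (E i r)) (g (E (Suc i) s))) | i r s. 1 \<le> i \<and> Suc i < n \<and> r \<ge> 1 \<and> s \<ge> 1}"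
proof -
  from x obtain i r s where xe: "x = fadd (fsub (fcomm (g (E i (r + 1))) (g (E (Suc i) s)))
               (fcomm (g (E i r)) (g (E (Suc i) (s + 1)))))
         (fmul (g (E i r)) (g (E (Suc i) s)))" and cd: "1 \<le> i \<and> Suc i < n \<and> r \<ge> 1 \<and> s \<ge> 1" by blast
  have e: "Tm (\<lambda>i. \<mu>1 i - \<mu>2 i) x = fadd (fsub (fcomm (g (E i (r + 1))) (g (E (Suc i) s)))
               (fcomm (g (E i r)) (g (E (Suc i) (s + 1)))))
         (fmul (g (E i r)) (g (E (Suc i) s)))"
    unfolding xe by (simp only: Tm_fadd Tm_fsub Tm_fsmult Tm_fcomm Tm_fgen Tm_fmul Tm_fone Tm_fzero Tm_if sh.simps) (use cd hc in \<open>simp_all add: Tm_simps\<close>)?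
  show ?thesis unfolding e
    apply (rule CollectI)
    apply (rule exI[where x="i"])
    apply (rule exI[where x="r"])
    apply (rule exI[where x="s"])
    apply (rule conjI[OF refl])
    using cd hc by auto
qed

lemma fam9:
  fixes n :: nat and \<mu>1 \<mu>2 :: "nat \<Rightarrow> int"
  assumes x: "x \<in> {fsub (fsub (fcomm (g (F i (r + 1))) (g (F (Suc i) s)))
               (fcomm (g (F i r)) (g (F (Suc i) (s + 1)))))
         (fmul (g (F (Suc i) s)) (g (F i r))) | i r s. 1 \<le> i \<and> Suc i < n \<and> r \<ge> 1 \<and> s \<ge> 1}"
    and hc: "\<And>i. 1 \<le> i \<Longrightarrow> i < n \<Longrightarrow> \<mu>1 (Suc i) - \<mu>2 (Suc i) = \<mu>1 i - \<mu>2 i"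
  shows "Tm (\<lambda>i. \<mu>1 i - \<mu>2 i) x \<in> {fsub (fsub (fcomm (g (F i (r + 1))) (g (F (Suc i) s)))
               (fcomm (g (F i r)) (g (F (Suc i) (s + 1)))))
         (fmul (g (F (Suc i) s)) (g (F i r))) | i r s. 1 \<le> i \<and> Suc i < n \<and> r \<ge> 1 \<and> s \<ge> 1}"
proof -
  from x obtain i r s where xe: "x = fsub (fsub (fcomm (g (F i (r + 1))) (g (F (Suc i) s)))
               (fcomm (g (F i r)) (g (F (Suc i) (s + 1)))))
         (fmul (g (F (Suc i) s)) (g (F i r)))" and cd: "1 \<le> i \<and> Suc i < n \<and> r \<ge> 1 \<and> s \<ge> 1" by blast
  have e: "Tm (\<lambda>i. \<mu>1 i - \<mu>2 i) x = fsub (fsub (fcomm (g (F i (r + 1))) (g (F (Suc i) s)))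
               (fcomm (g (F i r)) (g (F (Suc i) (s + 1)))))
         (fmul (g (F (Suc i) s)) (g (F i r)))"
    unfolding xe by (simp only: Tm_fadd Tm_fsub Tm_fsmult Tm_fcomm Tm_fgen Tm_fmul Tm_fone Tm_fzero Tm_if sh.simps) (use cd hc in \<open>simp_all add: Tm_simps\<close>)?
  show ?thesis unfolding e
    apply (rule CollectI)
    apply (rule exI[where x="i"])
    apply (rule exI[where x="r"])
    apply (rule exI[where x="s"])
    apply (rule conjI[OF refl])
    using cd hc by auto
qed

lemma fam10:
  fixes n :: nat and \<mu>1 \<mu>2 :: "nat \<Rightarrow> int"
  assumes x: "x \<in> {fcomm (g (E i r)) (g (E j s)) | i j r s. 1 \<le> i \<and> i < n \<and> 1 \<le> j \<and> j < n \<and> (i > Suc j \<or> j > Suc i) \<and> r \<ge> 1 \<and> s \<ge> 1}"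
    and hc: "\<And>i. 1 \<le> i \<Longrightarrow> i < n \<Longrightarrow> \<mu>1 (Suc i) - \<mu>2 (Suc i) = \<mu>1 i - \<mu>2 i"
  shows "Tm (\<lambda>i. \<mu>1 i - \<mu>2 i) x \<in> {fcomm (g (E i r)) (g (E j s)) | i j r s. 1 \<le> i \<and> i < n \<and> 1 \<le> j \<and> j < n \<and> (i > Suc j \<or> j > Suc i) \<and> r \<ge> 1 \<and> s \<ge> 1}"
proof -
  from x obtain i j r s where xe: "x = fcomm (g (E i r)) (g (E j s))" and cd: "1 \<le> i \<and> i < n \<and> 1 \<le> j \<and> j < n \<and> (i > Suc j \<or> j > Suc i) \<and> r \<ge> 1 \<and> s \<ge> 1" by blast
  have e: "Tm (\<lambda>i. \<mu>1 i - \<mu>2 i) x = fcomm (g (E i r)) (g (E j s))"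
    unfolding xe by (simp only: Tm_fadd Tm_fsub Tm_fsmult Tm_fcomm Tm_fgen Tm_fmul Tm_fone Tm_fzero Tm_if sh.simps) (use cd hc in \<open>simp_all add: Tm_simps\<close>)?
  show ?thesis unfolding e
    apply (rule CollectI)
    apply (rule exI[where x="i"])
    apply (rule exI[where x="j"])
    apply (rule exI[where x="r"])
    apply (rule exI[where x="s"])
    apply (rule conjI[OF refl])
    using cd hc by auto
qed

lemma fam11:
  fixes n :: nat and \<mu>1 \<mu>2 :: "nat \<Rightarrow> int"
  assumes x: "x \<in> {fcomm (g (F i r)) (g (F j s)) | i j r s. 1 \<le> i \<and> i < n \<and> 1 \<le> j \<and> j < n \<and> (i > Suc j \<or> j > Suc i) \<and> r \<ge> 1 \<and> s \<ge> 1}"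
    and hc: "\<And>i. 1 \<le> i \<Longrightarrow> i < n \<Longrightarrow> \<mu>1 (Suc i) - \<mu>2 (Suc i) = \<mu>1 i - \<mu>2 i"
  shows "Tm (\<lambda>i. \<mu>1 i - \<mu>2 i) x \<in> {fcomm (g (F i r)) (g (F j s)) | i j r s. 1 \<le> i \<and> i < n \<and> 1 \<le> j \<and> j < n \<and> (i > Suc j \<or> j > Suc i) \<and> r \<ge> 1 \<and> s \<ge> 1}"
proof -
  from x obtain i j r s where xe: "x = fcomm (g (F i r)) (g (F j s))" and cd: "1 \<le> i \<and> i < n \<and> 1 \<le> j \<and> j < n \<and> (i > Suc j \<or> j > Suc i) \<and> r \<ge> 1 \<and> s \<ge> 1" by blast
  have e: "Tm (\<lambda>i. \<mu>1 i - \<mu>2 i) x = fcomm (g (F i r)) (g (F j s))"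
    unfolding xe by (simp only: Tm_fadd Tm_fsub Tm_fsmult Tm_fcomm Tm_fgen Tm_fmul Tm_fone Tm_fzero Tm_if sh.simps) (use cd hc in \<open>simp_all add: Tm_simps\<close>)?
  show ?thesis unfolding e
    apply (rule CollectI)
    apply (rule exI[where x="i"])
    apply (rule exI[where x="j"])
    apply (rule exI[where x="r"])
    apply (rule exI[where x="s"])
    apply (rule conjI[OF refl])
    using cd hc by auto
qed

lemma fam12:
  fixes n :: nat and \<mu>1 \<mu>2 :: "nat \<Rightarrow> int"
  assumes x: "x \<in> {fadd (fcomm (g (E i r)) (fcomm (g (E i s)) (g (E j t))))
         (fcomm (g (E i s)) (fcomm (g (E i r)) (g (E j t)))) | i j r s t. 1 \<le> i \<and> i < n \<and> 1 \<le> j \<and> j < n \<and> (i = Suc j \<or> j = Suc i) \<and> r \<ge> 1 \<and> s \<ge> 1 \<and> t \<ge> 1}"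
    and hc: "\<And>i. 1 \<le> i \<Longrightarrow> i < n \<Longrightarrow> \<mu>1 (Suc i) - \<mu>2 (Suc i) = \<mu>1 i - \<mu>2 i"
  shows "Tm (\<lambda>i. \<mu>1 i - \<mu>2 i) x \<in> {fadd (fcomm (g (E i r)) (fcomm (g (E i s)) (g (E j t))))
         (fcomm (g (E i s)) (fcomm (g (E i r)) (g (E j t)))) | i j r s t. 1 \<le> i \<and> i < n \<and> 1 \<le> j \<and> j < n \<and> (i = Suc j \<or> j = Suc i) \<and> r \<ge> 1 \<and> s \<ge> 1 \<and> t \<ge> 1}"
proof -
  from x obtain i j r s t where xe: "x = fadd (fcomm (g (E i r)) (fcomm (g (E i s)) (g (E j t))))
         (fcomm (g (E i s)) (fcomm (g (E i r)) (g (E j t))))" and cd: "1 \<le> i \<and> i < n \<and> 1 \<le> j \<and> j < n \<and> (i = Suc j \<or> j = Suc i) \<and> r \<ge> 1 \<and> s \<ge> 1 \<and> t \<ge> 1" by blast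
  have e: "Tm (\<lambda>i. \<mu>1 i - \<mu>2 i) x = fadd (fcomm (g (E i r)) (fcomm (g (E i s)) (g (E j t))))
         (fcomm (g (E i s)) (fcomm (g (E i r)) (g (E j t))))"
    unfolding xe by (simp only: Tm_fadd Tm_fsub Tm_fsmult Tm_fcomm Tm_fgen Tm_fmul Tm_fone Tm_fzero Tm_if sh.simps) (use cd hc in \<open>simp_all add: Tm_simps\<close>)?
  show ?thesis unfolding e
    apply (rule CollectI)
    apply (rule exI[where x="i"])
    apply (rule exI[where x="j"])
    apply (rule exI[where x="r"])
    apply (rule exI[where x="s"])
    apply (rule exI[where x="t"])
    apply (rule conjI[OF refl])
    using cd hc by auto
qed

lemma fam13:
  fixes n :: nat and \<mu>1 \<mu>2 :: "nat \<Rightarrow> int"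
  assumes x: "x \<in> {fadd (fcomm (g (F i r)) (fcomm (g (F i s)) (g (F j t))))
         (fcomm (g (F i s)) (fcomm (g (F i r)) (g (F j t)))) | i j r s t. 1 \<le> i \<and> i < n \<and> 1 \<le> j \<and> j < n \<and> (i = Suc j \<or> j = Suc i) \<and> r \<ge> 1 \<and> s \<ge> 1 \<and> t \<ge> 1}"
    and hc: "\<And>i. 1 \<le> i \<Longrightarrow> i < n \<Longrightarrow> \<mu>1 (Suc i) - \<mu>2 (Suc i) = \<mu>1 i - \<mu>2 i"
  shows "Tm (\<lambda>i. \<mu>1 i - \<mu>2 i) x \<in> {fadd (fcomm (g (F i r)) (fcomm (g (F i s)) (g (F j t))))
         (fcomm (g (F i s)) (fcomm (g (F i r)) (g (F j t)))) | i j r s t. 1 \<le> i \<and> i < n \<and> 1 \<le> j \<and> j < n \<and> (i = Suc j \<or> j = Suc i) \<and> r \<ge> 1 \<and> s \<ge> 1 \<and> t \<ge> 1}"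
proof -
  from x obtain i j r s t where xe: "x = fadd (fcomm (g (F i r)) (fcomm (g (F i s)) (g (F j t))))
         (fcomm (g (F i s)) (fcomm (g (F i r)) (g (F j t))))" and cd: "1 \<le> i \<and> i < n \<and> 1 \<le> j \<and> j < n \<and> (i = Suc j \<or> j = Suc i) \<and> r \<ge> 1 \<and> s \<ge> 1 \<and> t \<ge> 1" by blast
  have e: "Tm (\<lambda>i. \<mu>1 i - \<mu>2 i) x = fadd (fcomm (g (F i r)) (fcomm (g (F i s)) (g (F j t))))
         (fcomm (g (F i s)) (fcomm (g (F i r)) (g (F j t))))"
    unfolding xe by (simp only: Tm_fadd Tm_fsub Tm_fsmult Tm_fcomm Tm_fgen Tm_fmul Tm_fone Tm_fzero Tm_if sh.simps) (use cd hc in \<open>simp_all add: Tm_simps\<close>)?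
  show ?thesis unfolding e
    apply (rule CollectI)
    apply (rule exI[where x="i"])
    apply (rule exI[where x="j"])
    apply (rule exI[where x="r"])
    apply (rule exI[where x="s"])
    apply (rule exI[where x="t"])
    apply (rule conjI[OF refl])
    using cd hc by auto
qed


lemma rels_sub:
  fixes n :: nat and \<mu>1 \<mu>2 :: "nat \<Rightarrow> int"
  assumes hyp: "\<forall>i. 1 \<le> i \<and> i \<le> n - 1 \<longrightarrow> \<mu>1 i - \<mu>1 (Suc i) = \<mu>2 i - \<mu>2 (Suc i)"
  shows "Tm (\<lambda>i. \<mu>1 i - \<mu>2 i) ` rels n \<mu>1 \<subseteq> rels n \<mu>2"
proof
  have hc: "\<mu>1 (Suc i) - \<mu>2 (Suc i) = \<mu>1 i - \<mu>2 i" if "1 \<le> i" "i < n" for i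
    using hyp that by force
  fix y assume "y \<in> Tm (\<lambda>i. \<mu>1 i - \<mu>2 i) ` rels n \<mu>1"
  then obtain x where x: "x \<in> rels n \<mu>1" and y: "y = Tm (\<lambda>i. \<mu>1 i - \<mu>2 i) x" by blast
  show "y \<in> rels n \<mu>2" unfolding y
    using x fam0[where x=x and n=n and ?\<mu>1.0=\<mu>1 and ?\<mu>2.0=\<mu>2, OF _ hc] fam1[where x=x and n=n and ?\<mu>1.0=\<mu>1 and ?\<mu>2.0=\<mu>2, OF _ hc] fam2[where x=x and n=n and ?\<mu>1.0=\<mu>1 and ?\<mu>2.0=\<mu>2, OF _ hc] fam3[where x=x and n=n and ?\<mu>1.0=\<mu>1 and ?\<mu>2.0=\<mu>2, OF _ hc] fam4[where x=x and n=n and ?\<mu>1.0=\<mu>1 and ?\<mu>2.0=\<mu>2, OF _ hc] fam5[where x=x and n=n and ?\<mu>1.0=\<mu>1 and ?\<mu>2.0=\<mu>2, OF _ hc] fam6[where x=x and n=n and ?\<mu>1.0=\<mu>1 and ?\<mu>2.0=\<mu>2, OF _ hc] fam7[where x=x and n=n and ?\<mu>1.0=\<mu>1 and ?\<mu>2.0=\<mu>2, OF _ hc] fam8[where x=x and n=n and ?\<mu>1.0=\<mu>1 and ?\<mu>2.0=\<mu>2, OF _ hc] fam9[where x=x and n=n and ?\<mu>1.0=\<mu>1 and ?\<mu>2.0=\<mu>2, OF _ hc] fam10[where x=x and n=n and ?\<mu>1.0=\<mu>1 and ?\<mu>2.0=\<mu>2, OF _ hc] fam11[where x=x and n=n and ?\<mu>1.0=\<mu>1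 and ?\<mu>2.0=\<mu>2, OF _ hc] fam12[where x=x and n=n and ?\<mu>1.0=\<mu>1 and ?\<mu>2.0=\<mu>2, OF _ hc] fam13[where x=x and n=n and ?\<mu>1.0=\<mu>1 and ?\<mu>2.0=\<mu>2, OF _ hc]
    unfolding rels_def by (simp only: Un_iff) metis
qed



lemma adm_sh:
  assumes "x \<in> adm n \<mu>1"
  shows "sh (\<lambda>i. \<mu>1 i - \<mu>2 i) x \<in> adm n \<mu>2"
  using assms by (cases x) (auto simp: adm_def)

lemma neg_diff: "neg (\<lambda>i. \<mu>1 i - \<mu>2 i) = (\<lambda>i. \<mu>2 i - \<mu>1 i)"
  by (simp add: neg_def)

lemma Tm_carrier_y:
  "f \<in> carrier (yfree n \<mu>1) \<Longrightarrow> Tm (\<lambda>i. \<mu>1 i - \<mu>2 i) f \<in> carrier (yfree n \<mu>2)"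
  unfolding yfree_def by (rule Tm_carrier[OF adm_sh])

lemma Tm_carrier_eq:
  "Tm (\<lambda>i. \<mu>1 i - \<mu>2 i) ` carrier (yfree n \<mu>1) = carrier (yfree n \<mu>2)"
proof
  show "Tm (\<lambda>i. \<mu>1 i - \<mu>2 i) ` carrier (yfree n \<mu>1) \<subseteq> carrier (yfree n \<mu>2)"
    using Tm_carrier_y by blast
  show "carrier (yfree n \<mu>2) \<subseteq> Tm (\<lambda>i. \<mu>1 i - \<mu>2 i) ` carrier (yfree n \<mu>1)"
  proof
    fix y assume y: "y \<in> carrier (yfree n \<mu>2)"
    have "Tm (\<lambda>i. \<mu>2 i - \<mu>1 i) y \<in> carrier (yfree n \<mu>1)" by (rule Tm_carrier_y[OF y])
    moreover have "y = Tm (\<lambda>i. \<mu>1 i - \<mu>2 i) (Tm (\<lambda>i. \<mu>2 i - \<mu>1 i) y)"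
      using Tm_inv2[of "\<lambda>i. \<mu>1 i - \<mu>2 i" y] by (simp add: neg_diff)
    ultimately show "y \<in> Tm (\<lambda>i. \<mu>1 i - \<mu>2 i) ` carrier (yfree n \<mu>1)" by blast
  qed
qed

lemma Tm_hom_y:
  "Tm (\<lambda>i. \<mu>1 i - \<mu>2 i) \<in> ring_hom (yfree n \<mu>1) (yfree n \<mu>2)"
  by (rule ring_hom_memI) (auto simp: Tm_carrier_y[unfolded yfree_def] yfree_def Tm_add_global Tm_mul_global Tm_one_global)

lemma Tm_inv_y1: "Tm (\<lambda>i. \<mu>2 i - \<mu>1 i) (Tm (\<lambda>i. \<mu>1 i - \<mu>2 i) x) = x"
  using Tm_inv[of "\<lambda>i. \<mu>1 i - \<mu>2 i" x] by (simp add: neg_diff)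

lemma main_iso:
  fixes n :: nat and \<mu>1 \<mu>2 :: "nat \<Rightarrow> int"
  assumes hyp: "\<forall>i. 1 \<le> i \<and> i \<le> n - 1 \<longrightarrow> \<mu>1 i - \<mu>1 (Suc i) = \<mu>2 i - \<mu>2 (Suc i)"
  defines "T \<equiv> Tm (\<lambda>i. \<mu>1 i - \<mu>2 i)"
  shows "(\<lambda>X. T ` X) \<in> ring_iso (yangian n \<mu>1) (yangian n \<mu>2)"
    and "\<And>x. T ` (ycls n \<mu>1 x) = ycls n \<mu>2 (T x)"
proof -
  define T' where "T' = Tm (\<lambda>i. \<mu>2 i - \<mu>1 i)"
  have hyp': "\<forall>i. 1 \<le> i \<and> i \<le> n - 1 \<longrightarrow> \<mu>2 i - \<mu>2 (Suc i) = \<mu>1 i - \<mu>1 (Suc i)"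
    using hyp by simp
  have inv1: "\<And>x. T' (T x) = x" unfolding T_def T'_def by (rule Tm_inv_y1)
  have inv2: "\<And>x. T (T' x) = x" unfolding T_def T'_def by (rule Tm_inv_y1)
  have r1: "T ` rels n \<mu>1 \<subseteq> rels n \<mu>2" unfolding T_def by (rule rels_sub[OF hyp])
  have r2: "T' ` rels n \<mu>2 \<subseteq> rels n \<mu>1" unfolding T'_def by (rule rels_sub[OF hyp'])
  have "rels n \<mu>2 = T ` T' ` rels n \<mu>2" by (simp add: image_image inv2)
  also have "\<dots> \<subseteq> T ` rels n \<mu>1" using r2 by (rule image_mono)
  finally have rels_eq: "T ` rels n \<mu>1 = rels n \<mu>2" using r1 by blast
  have rR: "ring (yfree n \<mu>1)" "ring (yfree n \<mu>2)" by (simp_all add: yfree_def ring_free_alg)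
  have hT: "T \<in> ring_hom (yfree n \<mu>1) (yfree n \<mu>2)" unfolding T_def by (rule Tm_hom_y)
  have hT': "T' \<in> ring_hom (yfree n \<mu>2) (yfree n \<mu>1)" unfolding T'_def by (rule Tm_hom_y)
  have c1: "T ` carrier (yfree n \<mu>1) = carrier (yfree n \<mu>2)" unfolding T_def by (rule Tm_carrier_eq)
  have c2: "T' ` carrier (yfree n \<mu>2) = carrier (yfree n \<mu>1)" unfolding T'_def by (rule Tm_carrier_eq)
  have ideq: "T ` yideal n \<mu>1 = yideal n \<mu>2"
    unfolding yideal_def rels_eq[symmetric]
    by (rule genideal_transport[OF rR hT hT' inv1 inv2 c1 c2])
  have add: "\<And>a b. T (a \<oplus>\<^bsub>yfree n \<mu>1\<^esub> b) = T a \<oplus>\<^bsub>yfree n \<mu>2\<^esub> T b"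
    unfolding T_def yfree_def by (rule Tm_add_global)
  have mul: "\<And>a b. T (a \<otimes>\<^bsub>yfree n \<mu>1\<^esub> b) = T a \<otimes>\<^bsub>yfree n \<mu>2\<^esub> T b"
    unfolding T_def yfree_def by (rule Tm_mul_global)
  have one: "T \<one>\<^bsub>yfree n \<mu>1\<^esub> = \<one>\<^bsub>yfree n \<mu>2\<^esub>"
    unfolding T_def yfree_def by (rule Tm_one_global)
  have inj: "inj T" by (metis inv1 injI)
  have carr: "T ` carrier (yfree n \<mu>1) = carrier (yfree n \<mu>2)"
    unfolding T_def by (rule Tm_carrier_eq)
  show "(\<lambda>X. T ` X) \<in> ring_iso (yangian n \<mu>1) (yangian n \<mu>2)"
    using quot_transport[of T "yfree n \<mu>1" "yfree n \<mu>2", OF add mul one carr inj, of "yideal n \<mu>1"]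
    unfolding yangian_def ideq .
  show "\<And>x. T ` (ycls n \<mu>1 x) = ycls n \<mu>2 (T x)"
    unfolding ycls_def using coset_transport[of T "yfree n \<mu>1" "yfree n \<mu>2", OF add] ideq by simp
qed

theorem lemma2p2:
  fixes n :: nat and \<mu>1 \<mu>2 :: "nat \<Rightarrow> int"
  assumes "n \<ge> 2"
    and "\<forall>i. 1 \<le> i \<and> i \<le> n - 1 \<longrightarrow> \<mu>1 i - \<mu>1 (Suc i) = \<mu>2 i - \<mu>2 (Suc i)"
  shows "\<exists>h. h \<in> ring_iso (yangian n \<mu>1) (yangian n \<mu>2)
    \<and> (\<forall>c. h (ycls n \<mu>1 (fscal c)) = ycls n \<mu>2 (fscal c))
    \<and> (\<forall>i r. 1 \<le> i \<and> i < n \<and> r \<ge> 1 \<longrightarrow>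
          h (ycls n \<mu>1 (fgen (E i r))) = ycls n \<mu>2 (fgen (E i r))
        \<and> h (ycls n \<mu>1 (fgen (F i r))) = ycls n \<mu>2 (fgen (F i r)))
    \<and> (\<forall>i s. 1 \<le> i \<and> i \<le> n \<and> s \<ge> \<mu>1 i \<longrightarrow>
          h (ycls n \<mu>1 (fgen (D i s))) = ycls n \<mu>2 (fgen (D i (s - (\<mu>1 i - \<mu>2 i)))))
    \<and> (\<forall>i s. 1 \<le> i \<and> i \<le> n \<and> s \<ge> - \<mu>1 i \<longrightarrow>
          h (ycls n \<mu>1 (fgen (Dt i s))) = ycls n \<mu>2 (fgen (Dt i (s + (\<mu>1 i - \<mu>2 i)))))"
proof (rule exI[of _ "\<lambda>X. Tm (\<lambda>i. \<mu>1 i - \<mu>2 i) ` X"], intro conjI allI impI)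
  note m = main_iso[OF assms(2)]
  show "(\<lambda>X. Tm (\<lambda>i. \<mu>1 i - \<mu>2 i) ` X) \<in> ring_iso (yangian n \<mu>1) (yangian n \<mu>2)"
    by (rule m(1))
qed (simp_all add: main_iso(2)[OF assms(2)] Tm_fscal Tm_fgen)

end
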